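(* Assume the model, Assumption (B), Assumption (K) and Assumption (S) below, and suppose the parameters $\theta_1,\dots,\theta_K$ are known. Let the policy be MaxWeight: at each time $t$, $$\{S_{k,t}\}_{k\in[K]}\in\operatorname{argmax}_{(S_1,\dots,S_K)\in\mathcal M(\mathcal N_t)}\sum_{k\in[K]}\sum_{n\in S_k}Q_n(t)\,\mu(n\mid S_k,\theta_k).$$ Then there is an absolute constant $C>0$ such that for every horizon $T\ge1$, $$\mathcal Q(T)\le C\,\frac{\min\{N,K\}}{\epsilon},$$ i.e. $\mathcal Q(T)=O(\min\{N,K\}/\epsilon)$; in particular the system is stable: $\lim_{T\to\infty}\mathcal Q(T)<\infty$.
   Context: Model. Fix integers $N,K,L,d\ge1$ with $N\le KL$. Agents (queues) $n\in[N]$ have known feature vectors $x_n\in\mathbb R^d$; arms (servers) $k\in[K]$ have unknown parameters $\theta_k\in\mathbb R^d$. For $S\subseteq[N]$, $\theta\in\mathbb R^d$ and $n\in S$, the multinomial logit (MNL) probabilities are $\mu(n\mid S,\theta)=\frac{\exp(x_n^\top\theta)}{1+\sum_{m\in S}\exp(x_m^\top\theta)}$ and, for the null agent $n_0$, $\mu(n_0\mid S,\theta)=\frac{1}{1+\sum_{m\in S}\exp(x_m^\top\theta)}$. For $\mathcal N\subseteq[N]$, $\mathcal M(\mathcal N)$ is the set of $K$-tuples $(S_1,\dots,S_K)$ of pairwise disjoint subsets of $\mathcal N$ with $|S_k|\le L$ for all $k$ and $\bigcup_k S_k=\mathcal N$. Dynamics: $Q_n(1)=0$ for all $n$. At each time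 $t=1,2,\dots$, let $\mathcal N_t=\{n\in[N]:Q_n(t)\neq0\}$; the policy chooses $(S_{1,t},\dots,S_{K,t})\in\mathcal M(\mathcal N_t)$ as a function of the past (features, past assortments and feedback, current queue lengths, internal randomness); for $n\in\mathcal N_t$, $k_{n,t}$ denotes the arm with $n\in S_{k_{n,t},t}$. Each arm $k$ independently accepts agent $n\in S_{k,t}$ with probability $\mu(n\mid S_{k,t},\theta_k)$ and accepts no one with probability $\mu(n_0\mid S_{k,t},\theta_k)$. $D_n(t)\in\{0,1\}$ indicates that $n$ was accepted ($D_n(t)=0$ if $n\notin\mathcal N_t$), and $y_{n,t}=D_n(t)$ is the observed feedback. Arrivals $A_n(t)\in\{0,1\}$ are Bernoulli($\lambda_n$), $\lambda_n\in[0,1]$ unknown, independent over $n$ and $t$ and of everything else. Queues evolve as $Q_n(t+1)=\max\{Q_n(t)+A_n(t)-D_n(t),0\}$. The average queue length is $\mathcal Q(T)=\frac1T\sum_{t=1}^T\sum_{n=1}^N\mathbb E[Q_n(t)]$. Assumption (B): $\|x_n\|_2\le1$ for all $n$ and $\|\theta_k\|_2\le1$ for all $k$. Assumption (K): there is $\kappa>0$ such that $\mu(n\mid S,\theta)\,\mu(n_0\mid S,\theta)\ge\kappa$ for all $S\subseteq[N]$ with $|S|\le L$, all $n\in S$ and all $\theta$ with $\|\theta\|_2\le1$. Assumption (S) (traffic slackness): there is $\epsilon\in(0,1)$ and $(S_1,\dots,S_K)\in\mathcal M([N])$ with $\lambda_n+\epsilon\le\mu(n\mid S_k,\theta_k)$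 for all $k\in[K]$ and all $n\in S_k$. *)

theory Defs
  imports "HOL-Probability.Probability"
begin

text \<open>Vectors in R^d are represented as functions nat => real, only coordinates i < d matter.
  Agents are 0..N-1, arms are 0..K-1.\<close>

definition ip :: "nat \<Rightarrow> (nat \<Rightarrow> real) \<Rightarrow> (nat \<Rightarrow> real) \<Rightarrow> real" where
  "ip d u v = (\<Sum>i<d. u i * v i)"

definition sqnorm :: "nat \<Rightarrow> (nat \<Rightarrow> real) \<Rightarrow> real" where
  "sqnorm d u = (\<Sum>i<d. (u i)\<^sup>2)"

definition mnl :: "nat \<Rightarrow> (nat \<Rightarrow> nat \<Rightarrow> real) \<Rightarrow> nat set \<Rightarrow> (nat \<Rightarrow> real) \<Rightarrow> nat \<Rightarrow> real" where
  "mnl d x S \<theta> n = exp (ip d (x n) \<theta>) / (1 + (\<Sum>m\<in>S. exp (ip d (x m) \<theta>)))"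

definition mnl0 :: "nat \<Rightarrow> (nat \<Rightarrow> nat \<Rightarrow> real) \<Rightarrow> nat set \<Rightarrow> (nat \<Rightarrow> real) \<Rightarrow> real" where
  "mnl0 d x S \<theta> = 1 / (1 + (\<Sum>m\<in>S. exp (ip d (x m) \<theta>)))"

text \<open>Choice of one arm offered the (finite) assortment S: Some n = accepts agent n, None = nobody.\<close>
definition mnl_choice :: "nat \<Rightarrow> (nat \<Rightarrow> nat \<Rightarrow> real) \<Rightarrow> nat set \<Rightarrow> (nat \<Rightarrow> real) \<Rightarrow> nat option pmf" where
  "mnl_choice d x S \<theta> = embed_pmf (\<lambda>r. case r of None \<Rightarrow> mnl0 d x S \<theta>
                                        | Some n \<Rightarrow> (if n \<in> S then mnl d x S \<theta> n else 0))"

definition assortments :: "nat \<Rightarrow> nat \<Rightarrow> nat set \<Rightarrow> (nat \<Rightarrow> nat set) set" where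
  "assortments K L A = {S. (\<forall>k<K. S k \<subseteq> A \<and> card (S k) \<le> L)
      \<and> (\<forall>k<K. \<forall>k'<K. k \<noteq> k' \<longrightarrow> S k \<inter> S k' = {})
      \<and> (\<Union>k<K. S k) = A \<and> (\<forall>k\<ge>K. S k = {})}"

definition active :: "nat \<Rightarrow> (nat \<Rightarrow> nat) \<Rightarrow> nat set" where
  "active N q = {n. n < N \<and> q n \<noteq> 0}"

definition mw_weight :: "nat \<Rightarrow> (nat \<Rightarrow> nat \<Rightarrow> real) \<Rightarrow> (nat \<Rightarrow> nat \<Rightarrow> real) \<Rightarrow> nat
     \<Rightarrow> (nat \<Rightarrow> nat) \<Rightarrow> (nat \<Rightarrow> nat set) \<Rightarrow> real" where
  "mw_weight d x \<theta> K q S = (\<Sum>k<K. \<Sum>n\<in>S k. real (q n) * mnl d x (S k) (\<theta> k) n)"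

definition maxweight_set :: "nat \<Rightarrow> (nat \<Rightarrow> nat \<Rightarrow> real) \<Rightarrow> (nat \<Rightarrow> nat \<Rightarrow> real) \<Rightarrow> nat \<Rightarrow> nat \<Rightarrow> nat
     \<Rightarrow> (nat \<Rightarrow> nat) \<Rightarrow> (nat \<Rightarrow> nat set) set" where
  "maxweight_set d x \<theta> N K L q =
     {S \<in> assortments K L (active N q).
        \<forall>S' \<in> assortments K L (active N q). mw_weight d x \<theta> K q S' \<le> mw_weight d x \<theta> K q S}"

text \<open>A state: the full past (queue vector, assortment, departures, arrivals) for each past round,
  together with the current queue vector.\<close>
type_synonym hist = "((nat \<Rightarrow> nat) \<times> (nat \<Rightarrow> nat set) \<times> (nat \<Rightarrow> bool) \<times> (nat \<Rightarrow> bool)) list \<times> (nat \<Rightarrow> nat)"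

definition step :: "nat \<Rightarrow> (nat \<Rightarrow> nat \<Rightarrow> real) \<Rightarrow> (nat \<Rightarrow> nat \<Rightarrow> real) \<Rightarrow> (nat \<Rightarrow> real) \<Rightarrow> nat \<Rightarrow> nat
     \<Rightarrow> (hist \<Rightarrow> (nat \<Rightarrow> nat set) pmf) \<Rightarrow> hist \<Rightarrow> hist pmf" where
  "step d x \<theta> lam N K pol s =
     bind_pmf (pol s) (\<lambda>S.
     bind_pmf (Pi_pmf {..<K} None (\<lambda>k. mnl_choice d x (S k) (\<theta> k))) (\<lambda>c.
     bind_pmf (Pi_pmf {..<N} False (\<lambda>n. bernoulli_pmf (lam n))) (\<lambda>a.
       let dep = (\<lambda>n. \<exists>k<K. c k = Some n) in
       return_pmf (fst s @ [(snd s, S, dep, a)],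
                   \<lambda>n. (snd s n + of_bool (a n)) - of_bool (dep n)))))"

text \<open>traj ... t is the distribution of the state at time t+1 (paper's indexing); Q(1) = 0.\<close>
fun traj :: "nat \<Rightarrow> (nat \<Rightarrow> nat \<Rightarrow> real) \<Rightarrow> (nat \<Rightarrow> nat \<Rightarrow> real) \<Rightarrow> (nat \<Rightarrow> real) \<Rightarrow> nat \<Rightarrow> nat
     \<Rightarrow> (hist \<Rightarrow> (nat \<Rightarrow> nat set) pmf) \<Rightarrow> nat \<Rightarrow> hist pmf" where
  "traj d x \<theta> lam N K pol 0 = return_pmf ([], \<lambda>_. 0)"
| "traj d x \<theta> lam N K pol (Suc t) = bind_pmf (traj d x \<theta> lam N K pol t) (step d x \<theta> lam N K pol)"

definition avg_queue :: "nat \<Rightarrow> (nat \<Rightarrow> nat \<Rightarrow> real) \<Rightarrow> (nat \<Rightarrow> nat \<Rightarrow> real) \<Rightarrow> (nat \<Rightarrow> real) \<Rightarrow> nat \<Rightarrow> nat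
     \<Rightarrow> (hist \<Rightarrow> (nat \<Rightarrow> nat set) pmf) \<Rightarrow> nat \<Rightarrow> real" where
  "avg_queue d x \<theta> lam N K pol T =
     (1 / real T) * (\<Sum>t<T. \<Sum>n<N. measure_pmf.expectation (traj d x \<theta> lam N K pol t) (\<lambda>s. real (snd s n)))"

end

theory Submission
  imports Defs
begin

lemma den_pos: "finite S \<Longrightarrow> 0 < 1 + (\<Sum>m\<in>S. exp (ip d (x m) th))"
  by (smt (verit) exp_gt_zero sum_nonneg)

lemma mnl_nonneg: "finite S \<Longrightarrow> 0 \<le> mnl d x S th n"
  unfolding mnl_def using den_pos[of S d x th] by simp

lemma mnl_le1: "finite S \<Longrightarrow> n \<in> S \<Longrightarrow> mnl d x S th n \<le> 1"
proof -
  assume f: "finite S" and n: "n \<in> S"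
  have "exp (ip d (x n) th) \<le> (\<Sum>m\<in>S. exp (ip d (x m) th))"
    using f n by (intro member_le_sum) auto
  then show ?thesis unfolding mnl_def using den_pos[OF f, of d x th] by simp
qed

lemma mnl_sum_le1: "finite S \<Longrightarrow> (\<Sum>n\<in>S. mnl d x S th n) \<le> 1"
proof -
  assume f: "finite S"
  have "(\<Sum>n\<in>S. mnl d x S th n) = (\<Sum>m\<in>S. exp (ip d (x m) th)) / (1 + (\<Sum>m\<in>S. exp (ip d (x m) th)))"
    unfolding mnl_def by (simp add: sum_divide_distrib)
  also have "\<dots> \<le> 1" using den_pos[OF f, of d x th] by simp
  finally show ?thesis .
qed

lemma mnl_mono: "finite S \<Longrightarrow> S' \<subseteq> S \<Longrightarrow> mnl d x S th n \<le> mnl d x S' th n"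
proof -
  assume f: "finite S" and s: "S' \<subseteq> S"
  have f': "finite S'" using f s finite_subset by blast
  have "(\<Sum>m\<in>S'. exp (ip d (x m) th)) \<le> (\<Sum>m\<in>S. exp (ip d (x m) th))"
    using f s by (intro sum_mono2) auto
  then show ?thesis unfolding mnl_def using den_pos[OF f', of d x th]
    by (intro divide_left_mono) auto
qed

lemma mnl_total: "finite S \<Longrightarrow> mnl0 d x S th + (\<Sum>n\<in>S. mnl d x S th n) = 1"
proof -
  assume f: "finite S"
  have "(\<Sum>n\<in>S. mnl d x S th n) = (\<Sum>m\<in>S. exp (ip d (x m) th)) / (1 + (\<Sum>m\<in>S. exp (ip d (x m) th)))"
    unfolding mnl_def by (simp add: sum_divide_distrib)
  then show ?thesis unfolding mnl0_def using den_pos[OF f, of d x th]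
    by (simp add: field_simps)
qed

definition chf where "chf d x S th = (\<lambda>r. case r of None \<Rightarrow> mnl0 d x S th
                                        | Some n \<Rightarrow> (if n \<in> S then mnl d x S th n else 0))"

lemma chf_valid:
  assumes f: "finite S"
  shows "\<And>r. 0 \<le> chf d x S th r" "(\<integral>\<^sup>+r. chf d x S th r \<partial>count_space UNIV) = 1"
proof -
  show "\<And>r. 0 \<le> chf d x S th r"
    unfolding chf_def mnl0_def using mnl_nonneg[OF f] den_pos[OF f, of d x th]
    by (auto split: option.split)
  have "(\<integral>\<^sup>+r. chf d x S th r \<partial>count_space UNIV) = (\<Sum>r\<in>insert None (Some ` S). ennreal (chf d x S th r))"
    by (rule nn_integral_count_space') (use f in \<open>auto simp: chf_def split: option.split\<close>)
  also have "\<dots> = ennreal (\<Sum>r\<in>insert None (Some ` S). chf d x S th r)"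
    using \<open>\<And>r. 0 \<le> chf d x S th r\<close> by (intro sum_ennreal) auto
  also have "(\<Sum>r\<in>insert None (Some ` S). chf d x S th r) = mnl0 d x S th + (\<Sum>n\<in>S. mnl d x S th n)"
    using f by (simp add: sum.reindex chf_def)
  also have "\<dots> = 1" using mnl_total[OF f] .
  finally show "(\<integral>\<^sup>+r. chf d x S th r \<partial>count_space UNIV) = 1" by simp
qed

lemma pmf_choice: "finite S \<Longrightarrow> pmf (mnl_choice d x S th) r = chf d x S th r"
  unfolding mnl_choice_def chf_def[symmetric]
  by (rule pmf_embed_pmf) (auto intro: chf_valid)

lemma set_choice: "finite S \<Longrightarrow> set_pmf (mnl_choice d x S th) \<subseteq> insert None (Some ` S)"
  by (auto simp: set_pmf_iff pmf_choice chf_def split: option.splits if_splits)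


lemma sq_ineq: "real ((q + of_bool a) - of_bool dd)^2 \<le> real q^2 + (2 * real q + 1) * of_bool a + (1 - 2 * real q) * of_bool dd"
  by (cases a; cases dd; cases q) (auto simp: power2_eq_square algebra_simps)

lemma bnd_int: "(\<And>x. \<bar>f x\<bar> \<le> B) \<Longrightarrow> integrable (measure_pmf p) (f :: _ \<Rightarrow> real)"
  by (rule measure_pmf.integrable_const_bound[where B=B]) auto

lemma exp_single: "measure_pmf.expectation p (\<lambda>r. of_bool (r = v) :: real) = pmf p v"
proof -
  have "(\<lambda>r. of_bool (r = v) :: real) = indicator {v}" by (auto simp: indicator_def)
  then show ?thesis by (simp add: measure_pmf_single)
qed

lemma exp_comp: "finite A \<Longrightarrow> k \<in> A \<Longrightarrow> measure_pmf.expectation (Pi_pmf A dflt p) (\<lambda>c. g (c k) :: real)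
   = measure_pmf.expectation (p k) g"
proof -
  assume "finite A" "k \<in> A"
  have "measure_pmf.expectation (Pi_pmf A dflt p) (\<lambda>c. g (c k)) =
        measure_pmf.expectation (map_pmf (\<lambda>c. c k) (Pi_pmf A dflt p)) g" by simp
  also have "map_pmf (\<lambda>c. c k) (Pi_pmf A dflt p) = p k" using \<open>finite A\<close> \<open>k \<in> A\<close> by (subst Pi_pmf_component) auto
  finally show ?thesis .
qed

lemma exp_arr:
  fixes N :: nat
  assumes "\<And>n. n < N \<Longrightarrow> 0 \<le> lam n \<and> lam n \<le> 1"
  shows "measure_pmf.expectation (Pi_pmf {..<N} False (\<lambda>n. bernoulli_pmf (lam n)))
           (\<lambda>a. \<Sum>n<N. w n * of_bool (a n)) = (\<Sum>n<N. w n * lam n)"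
proof -
  have bi: "integrable (measure_pmf P) (\<lambda>a. w n * of_bool (a n))" for P n
    by (rule bnd_int[where B="\<bar>w n\<bar>"]) auto
  have "measure_pmf.expectation (Pi_pmf {..<N} False (\<lambda>n. bernoulli_pmf (lam n)))
           (\<lambda>a. \<Sum>n<N. w n * of_bool (a n)) = (\<Sum>n<N. measure_pmf.expectation (Pi_pmf {..<N} False (\<lambda>n. bernoulli_pmf (lam n))) (\<lambda>a. w n * of_bool (a n)))"
    by (subst Bochner_Integration.integral_sum) (use bi in auto)
  also have "\<dots> = (\<Sum>n<N. w n * lam n)"
  proof (rule sum.cong)
    fix n assume n: "n \<in> {..<N}"
    show "measure_pmf.expectation (Pi_pmf {..<N} False (\<lambda>n. bernoulli_pmf (lam n))) (\<lambda>a. w n * of_bool (a n)) = w n * lam n"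
      using assms[of n] n by (subst exp_comp) auto
  qed simp
  finally show ?thesis .
qed


lemma dep_pt:
  fixes K :: nat
  assumes c: "\<And>k. k < K \<Longrightarrow> c k \<in> insert None (Some ` S k)"
    and disj: "\<And>k k'. k<K \<Longrightarrow> k'<K \<Longrightarrow> k\<noteq>k' \<Longrightarrow> S k \<inter> S k' = {}"
  shows "(of_bool (\<exists>k<K. c k = Some n) :: real) = (\<Sum>k<K. of_bool (c k = Some n))"
proof (cases "\<exists>k<K. c k = Some n")
  case True
  then obtain k0 where k0: "k0 < K" "c k0 = Some n" by blast
  have "\<And>k. k < K \<Longrightarrow> (of_bool (c k = Some n) :: real) = of_bool (k = k0)"
  proof -
    fix k assume k: "k < K"
    show "(of_bool (c k = Some n) :: real) = of_bool (k = k0)"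
    proof (cases "k = k0")
      case False
      have "n \<in> S k0" using c[OF k0(1)] k0(2) by auto
      moreover have "c k = Some n \<Longrightarrow> n \<in> S k" using c[OF k] by auto
      ultimately show ?thesis using disj[OF k k0(1) False] by auto
    qed (use k0 in auto)
  qed
  then have "(\<Sum>k<K. (of_bool (c k = Some n) :: real)) = (\<Sum>k<K. of_bool (k = k0))"
    by (intro sum.cong) auto
  also have "\<dots> = 1" using k0 by (simp add: sum.delta)
  finally show ?thesis using True by simp
qed simp

lemma exp_dep:
  fixes K N :: nat
  assumes fin: "\<And>k. k<K \<Longrightarrow> finite (S k)"
    and disj: "\<And>k k'. k<K \<Longrightarrow> k'<K \<Longrightarrow> k\<noteq>k' \<Longrightarrow> S k \<inter> S k' = {}"
  shows "measure_pmf.expectation (Pi_pmf {..<K} None (\<lambda>k. mnl_choice d x (S k) (\<theta> k)))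
     (\<lambda>c. \<Sum>n<N. w n * of_bool (\<exists>k<K. c k = Some n))
   = (\<Sum>k<K. \<Sum>n\<in>S k \<inter> {..<N}. w n * mnl d x (S k) (\<theta> k) n)"
proof -
  let ?P = "Pi_pmf {..<K} None (\<lambda>k. mnl_choice d x (S k) (\<theta> k))"
  have bi: "integrable (measure_pmf P) (\<lambda>c. w n * of_bool (c (k::nat) = Some n))" for P n k
    by (rule bnd_int[where B="\<bar>w n\<bar>"]) auto
  have ae: "AE c in ?P. (\<Sum>n<N. w n * of_bool (\<exists>k<K. c k = Some n)) = (\<Sum>n<N. \<Sum>k<K. w n * of_bool (c k = Some n))"
  proof (rule AE_pmfI)
    fix c assume "c \<in> set_pmf ?P"
    then have "c \<in> PiE_dflt {..<K} None (set_pmf \<circ> (\<lambda>k. mnl_choice d x (S k) (\<theta> k)))"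
      using set_Pi_pmf_subset'[of "{..<K}" None "\<lambda>k. mnl_choice d x (S k) (\<theta> k)"] by auto
    then have c: "\<And>k. k < K \<Longrightarrow> c k \<in> insert None (Some ` S k)"
    proof -
      fix k assume k: "k < K"
      then have "c k \<in> set_pmf (mnl_choice d x (S k) (\<theta> k))"
        using \<open>c \<in> PiE_dflt _ _ _\<close> unfolding PiE_dflt_def by auto
      then show "c k \<in> insert None (Some ` S k)" using set_choice[OF fin[OF k]] by blast
    qed
    show "(\<Sum>n<N. w n * of_bool (\<exists>k<K. c k = Some n)) = (\<Sum>n<N. \<Sum>k<K. w n * of_bool (c k = Some n))"
      apply (rule sum.cong[OF refl])
      apply (subst dep_pt[OF c disj])
      prefer 5 apply (rule sum_distrib_left)
      by auto
  qed
  have "measure_pmf.expectation ?P (\<lambda>c. \<Sum>n<N. w n * of_bool (\<exists>k<K. c k = Some n))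
     = measure_pmf.expectation ?P (\<lambda>c. \<Sum>n<N. \<Sum>k<K. w n * of_bool (c k = Some n))"
    by (rule integral_cong_AE) (use ae in auto)
  also have "\<dots> = (\<Sum>n<N. \<Sum>k<K. measure_pmf.expectation ?P (\<lambda>c. w n * of_bool (c k = Some n)))"
  proof -
    have "measure_pmf.expectation ?P (\<lambda>c. \<Sum>n<N. \<Sum>k<K. w n * of_bool (c k = Some n))
       = (\<Sum>n<N. measure_pmf.expectation ?P (\<lambda>c. \<Sum>k<K. w n * of_bool (c k = Some n)))"
      apply (rule Bochner_Integration.integral_sum[of "{..<N}" _ "\<lambda>n c. \<Sum>k<K. w n * of_bool (c k = Some n)"])
      apply (rule Bochner_Integration.integrable_sum)
      apply (rule bi)
      done
    also have "\<dots> = (\<Sum>n<N. \<Sum>k<K. measure_pmf.expectation ?P (\<lambda>c. w n * of_bool (c k = Some n)))"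
      by (rule sum.cong[OF refl], rule Bochner_Integration.integral_sum[of "{..<K}" _ "\<lambda>k c. w n * of_bool (c k = Some n)" for n], rule bi)
    finally show ?thesis .
  qed
  also have "\<dots> = (\<Sum>n<N. \<Sum>k<K. w n * (if n \<in> S k then mnl d x (S k) (\<theta> k) n else 0))"
  proof (intro sum.cong refl)
    fix n k assume k: "k \<in> {..<K}"
    have "measure_pmf.expectation ?P (\<lambda>c. w n * of_bool (c k = Some n))
       = w n * measure_pmf.expectation ?P (\<lambda>c. of_bool (c k = Some n))" by simp
    also have "measure_pmf.expectation ?P (\<lambda>c. of_bool (c k = Some n) :: real) =
        measure_pmf.expectation (mnl_choice d x (S k) (\<theta> k)) (\<lambda>r. of_bool (r = Some n) :: real)"
      using exp_comp[of "{..<K}" k None "\<lambda>k. mnl_choice d x (S k) (\<theta> k)" "\<lambda>r. of_bool (r = Some n)"] k by simp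
    also have "\<dots> = (if n \<in> S k then mnl d x (S k) (\<theta> k) n else 0)"
      using k fin by (simp add: exp_single pmf_choice chf_def)
    finally show "measure_pmf.expectation ?P (\<lambda>c. w n * of_bool (c k = Some n)) =
         w n * (if n \<in> S k then mnl d x (S k) (\<theta> k) n else 0)" .
  qed
  also have "\<dots> = (\<Sum>k<K. \<Sum>n<N. (if n \<in> S k then w n * mnl d x (S k) (\<theta> k) n else 0))"
    by (subst sum.swap) (auto intro!: sum.cong)
  also have "\<dots> = (\<Sum>k<K. \<Sum>n\<in>S k \<inter> {..<N}. w n * mnl d x (S k) (\<theta> k) n)"
    by (rule sum.cong[OF refl]) (subst Int_commute, subst sum.inter_restrict, auto)
  finally show ?thesis .
qed


definition VV :: "nat \<Rightarrow> (nat \<Rightarrow> nat) \<Rightarrow> real" where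
  "VV N q = (\<Sum>n<N. real (q n)^2)"

definition qn :: "nat \<Rightarrow> (nat \<Rightarrow> nat) \<Rightarrow> (nat \<Rightarrow> nat option) \<Rightarrow> (nat \<Rightarrow> bool) \<Rightarrow> nat \<Rightarrow> nat" where
  "qn K q c a = (\<lambda>n. (q n + of_bool (a n)) - of_bool (\<exists>k<K. c k = Some n))"

lemma VV_nonneg: "0 \<le> VV N q" unfolding VV_def by (simp add: sum_nonneg)

lemma VV_qn_bound: "VV N (qn K q c a) \<le> (\<Sum>n<N. (real (q n) + 1)^2)"
  unfolding VV_def qn_def
  by (intro sum_mono power_mono) auto

lemma VV_qn_pt: "VV N (qn K q c a) \<le> VV N q + (\<Sum>n<N. (2 * real (q n) + 1) * of_bool (a n))
    + (\<Sum>n<N. (1 - 2 * real (q n)) * of_bool (\<exists>k<K. c k = Some n))"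
  unfolding VV_def qn_def sum.distrib[symmetric]
  by (intro sum_mono, rule sq_ineq)

lemma int_le_const: "(\<And>x. 0 \<le> f x) \<Longrightarrow> (\<And>x. f x \<le> B) \<Longrightarrow> \<bar>measure_pmf.expectation p (f :: _ \<Rightarrow> real)\<bar> \<le> B"
proof -
  assume a: "\<And>x. 0 \<le> f x" "\<And>x. f x \<le> B"
  have i: "integrable (measure_pmf p) f" by (rule bnd_int[where B=B]) (use a in \<open>smt (verit)\<close>)
  have "measure_pmf.expectation p f \<le> measure_pmf.expectation p (\<lambda>_. B)"
    by (rule integral_mono) (use i a in auto)
  moreover have "0 \<le> measure_pmf.expectation p f" by (rule Bochner_Integration.integral_nonneg) (use a in auto)
  ultimately show ?thesis by simp
qed

lemma drift_S:
  fixes N K :: nat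
  assumes fin: "\<And>k. k<K \<Longrightarrow> finite (S k)"
    and disj: "\<And>k k'. k<K \<Longrightarrow> k'<K \<Longrightarrow> k\<noteq>k' \<Longrightarrow> S k \<inter> S k' = {}"
    and lam: "\<And>n. n < N \<Longrightarrow> 0 \<le> lam n \<and> lam n \<le> 1"
  shows "measure_pmf.expectation (Pi_pmf {..<K} None (\<lambda>k. mnl_choice d x (S k) (\<theta> k)))
     (\<lambda>c. measure_pmf.expectation (Pi_pmf {..<N} False (\<lambda>n. bernoulli_pmf (lam n))) (\<lambda>a. VV N (qn K q c a)))
   \<le> VV N q + (\<Sum>n<N. (2 * real (q n) + 1) * lam n)
      + (\<Sum>k<K. \<Sum>n\<in>S k \<inter> {..<N}. (1 - 2 * real (q n)) * mnl d x (S k) (\<theta> k) n)"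
proof -
  let ?P = "Pi_pmf {..<K} None (\<lambda>k. mnl_choice d x (S k) (\<theta> k))"
  let ?B = "Pi_pmf {..<N} False (\<lambda>n. bernoulli_pmf (lam n))"
  let ?Bq = "\<Sum>n<N. (real (q n) + 1)^2"
  let ?F = "\<lambda>c. VV N q + (\<Sum>n<N. (2 * real (q n) + 1) * lam n)
       + (\<Sum>n<N. (1 - 2 * real (q n)) * of_bool (\<exists>k<K. c k = Some n))"
  have iV: "integrable (measure_pmf P) (\<lambda>a. VV N (qn K q c a))" for P c
    by (rule bnd_int[where B="?Bq"]) (metis VV_nonneg VV_qn_bound abs_of_nonneg)
  have iA: "integrable (measure_pmf P) (\<lambda>a. \<Sum>n<N. (2 * real (q n) + 1) * of_bool (a n))" for P
    by (rule bnd_int[where B="\<Sum>n<N. \<bar>2 * real (q n) + 1\<bar>"])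
       (rule order_trans[OF sum_abs], rule sum_mono, simp)
  have iD: "integrable (measure_pmf P) (\<lambda>c. \<Sum>n<N. (1 - 2 * real (q n)) * of_bool (\<exists>k<K. c k = Some n))" for P
    by (rule bnd_int[where B="\<Sum>n<N. \<bar>1 - 2 * real (q n)\<bar>"])
       (rule order_trans[OF sum_abs], rule sum_mono, simp)
  have inner: "measure_pmf.expectation ?B (\<lambda>a. VV N (qn K q c a)) \<le> ?F c" for c
  proof -
    have "measure_pmf.expectation ?B (\<lambda>a. VV N (qn K q c a)) \<le>
       measure_pmf.expectation ?B (\<lambda>a. VV N q + (\<Sum>n<N. (2 * real (q n) + 1) * of_bool (a n))
    + (\<Sum>n<N. (1 - 2 * real (q n)) * of_bool (\<exists>k<K. c k = Some n)))"
      by (rule integral_mono) (use iV iA VV_qn_pt in auto)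
    also have "\<dots> = VV N q + measure_pmf.expectation ?B (\<lambda>a. \<Sum>n<N. (2 * real (q n) + 1) * of_bool (a n))
    + (\<Sum>n<N. (1 - 2 * real (q n)) * of_bool (\<exists>k<K. c k = Some n))"
      using iA by simp
    also have "measure_pmf.expectation ?B (\<lambda>a. \<Sum>n<N. (2 * real (q n) + 1) * of_bool (a n))
        = (\<Sum>n<N. (2 * real (q n) + 1) * lam n)"
      by (rule exp_arr) (use lam in auto)
    finally show ?thesis .
  qed
  have "measure_pmf.expectation ?P (\<lambda>c. measure_pmf.expectation ?B (\<lambda>a. VV N (qn K q c a)))
     \<le> measure_pmf.expectation ?P ?F"
  proof (rule integral_mono)
    show "integrable (measure_pmf ?P) (\<lambda>c. measure_pmf.expectation ?B (\<lambda>a. VV N (qn K q c a)))"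
      by (rule bnd_int[where B="?Bq"], rule int_le_const) (use VV_nonneg VV_qn_bound in auto)
    show "integrable (measure_pmf ?P) ?F" using iD by simp
  qed (use inner in auto)
  also have "measure_pmf.expectation ?P ?F = VV N q + (\<Sum>n<N. (2 * real (q n) + 1) * lam n)
     + measure_pmf.expectation ?P (\<lambda>c. \<Sum>n<N. (1 - 2 * real (q n)) * of_bool (\<exists>k<K. c k = Some n))"
    using iD by simp
  also have "measure_pmf.expectation ?P (\<lambda>c. \<Sum>n<N. (1 - 2 * real (q n)) * of_bool (\<exists>k<K. c k = Some n))
     = (\<Sum>k<K. \<Sum>n\<in>S k \<inter> {..<N}. (1 - 2 * real (q n)) * mnl d x (S k) (\<theta> k) n)"
    by (rule exp_dep[OF fin disj])
  finally show ?thesis .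
qed


lemma assort_props:
  assumes "S \<in> assortments K L A"
  shows "\<And>k. k < K \<Longrightarrow> S k \<subseteq> A" "\<And>k k'. k<K \<Longrightarrow> k'<K \<Longrightarrow> k\<noteq>k' \<Longrightarrow> S k \<inter> S k' = {}"
    "(\<Union>k<K. S k) = A"
  using assms unfolding assortments_def by auto

lemma sum_part:
  fixes f :: "nat \<Rightarrow> real"
  assumes S: "S \<in> assortments K L A" and fA: "finite A"
  shows "(\<Sum>n\<in>A. f n) = (\<Sum>k<K. \<Sum>n\<in>S k. f n)"
proof -
  have "(\<Sum>n\<in>A. f n) = (\<Sum>n\<in>(\<Union>k\<in>{..<K}. S k). f n)" using assort_props(3)[OF S] by simp
  also have "\<dots> = (\<Sum>k<K. \<Sum>n\<in>S k. f n)"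
    by (rule sum.UNION_disjoint) (use assort_props[OF S] fA finite_subset in auto)
  finally show ?thesis .
qed

lemma restrict_assort:
  assumes S: "S \<in> assortments K L B" and fB: "finite B" and AB: "A \<subseteq> B"
  shows "(\<lambda>k. S k \<inter> A) \<in> assortments K L A"
proof -
  have "card (S k \<inter> A) \<le> L" if "k < K" for k
  proof -
    have "finite (S k)" using assort_props(1)[OF S that] fB finite_subset by blast
    then have "card (S k \<inter> A) \<le> card (S k)" by (intro card_mono) auto
    also have "\<dots> \<le> L" using S that unfolding assortments_def by auto
    finally show ?thesis .
  qed
  moreover have "(\<Union>k<K. S k \<inter> A) = A" using assort_props(3)[OF S] AB by blast
  moreover have "\<forall>k<K. \<forall>k'<K. k \<noteq> k' \<longrightarrow> (S k \<inter> A) \<inter> (S k' \<inter> A) = {}"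
    using assort_props(2)[OF S] by blast
  ultimately show ?thesis using S unfolding assortments_def by (simp add: Int_lower2)
qed

lemma active_sub: "active N q \<subseteq> {..<N}" unfolding active_def by auto
lemma active_fin: "finite (active N q)" using active_sub finite_subset by blast

lemma drift_bound:
  fixes N K :: nat and \<epsilon> :: real
  assumes S: "S \<in> maxweight_set d x \<theta> N K L q"
    and Ss: "Ss \<in> assortments K L {..<N}"
    and slack: "\<forall>k<K. \<forall>n\<in>Ss k. lam n + \<epsilon> \<le> mnl d x (Ss k) (\<theta> k) n"
    and lam: "\<And>n. n < N \<Longrightarrow> 0 \<le> lam n \<and> lam n \<le> 1"
    and eps: "0 < \<epsilon>"
  shows "VV N q + (\<Sum>n<N. (2 * real (q n) + 1) * lam n)
      + (\<Sum>k<K. \<Sum>n\<in>S k \<inter> {..<N}. (1 - 2 * real (q n)) * mnl d x (S k) (\<theta> k) n)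
    \<le> VV N q + 2 * real (min N K) - 2 * \<epsilon> * (\<Sum>n<N. real (q n))"
proof -
  let ?A = "active N q"
  have SA: "S \<in> assortments K L ?A" and Sopt: "\<And>S'. S' \<in> assortments K L ?A \<Longrightarrow> mw_weight d x \<theta> K q S' \<le> mw_weight d x \<theta> K q S"
    using S unfolding maxweight_set_def by auto
  have SkN: "\<And>k. k<K \<Longrightarrow> S k \<subseteq> {..<N}" using assort_props(1)[OF SA] active_sub by blast
  have finS: "\<And>k. k<K \<Longrightarrow> finite (S k)" using SkN finite_subset by blast
  have finSs: "\<And>k. k<K \<Longrightarrow> finite (Ss k)" using assort_props(1)[OF Ss] finite_subset by blast
  let ?mw = "mw_weight d x \<theta> K q S"
  let ?M = "\<Sum>k<K. \<Sum>n\<in>S k. mnl d x (S k) (\<theta> k) n"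
  have e1: "(\<Sum>k<K. \<Sum>n\<in>S k \<inter> {..<N}. (1 - 2 * real (q n)) * mnl d x (S k) (\<theta> k) n) = ?M - 2 * ?mw"
  proof -
    have "(\<Sum>k<K. \<Sum>n\<in>S k \<inter> {..<N}. (1 - 2 * real (q n)) * mnl d x (S k) (\<theta> k) n)
       = (\<Sum>k<K. \<Sum>n\<in>S k. mnl d x (S k) (\<theta> k) n - 2 * (real (q n) * mnl d x (S k) (\<theta> k) n))"
      by (rule sum.cong[OF refl]) (use SkN in \<open>auto simp: Int_absorb2 algebra_simps intro!: sum.cong\<close>)
    also have "\<dots> = ?M - 2 * ?mw"
      unfolding mw_weight_def by (simp add: sum_subtractf sum_distrib_left)
    finally show ?thesis .
  qed
  define S' where "S' = (\<lambda>k. Ss k \<inter> ?A)"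
  have S'A: "S' \<in> assortments K L ?A" unfolding S'_def by (rule restrict_assort[OF Ss]) (use active_sub in auto)
  have mw': "(\<Sum>n<N. real (q n) * (lam n + \<epsilon>)) \<le> mw_weight d x \<theta> K q S'"
  proof -
    have "(\<Sum>n<N. real (q n) * (lam n + \<epsilon>)) = (\<Sum>n\<in>?A. real (q n) * (lam n + \<epsilon>))"
      by (rule sum.mono_neutral_right) (auto simp: active_def)
    also have "\<dots> = (\<Sum>k<K. \<Sum>n\<in>S' k. real (q n) * (lam n + \<epsilon>))"
      by (rule sum_part[OF S'A active_fin])
    also have "\<dots> \<le> mw_weight d x \<theta> K q S'"
      unfolding mw_weight_def
    proof (intro sum_mono mult_left_mono)
      fix k n assume k: "k \<in> {..<K}" and n: "n \<in> S' k"
      have "lam n + \<epsilon> \<le> mnl d x (Ss k) (\<theta> k) n" using slack k n unfolding S'_def by auto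
      also have "\<dots> \<le> mnl d x (S' k) (\<theta> k) n" using finSs k unfolding S'_def by (intro mnl_mono) auto
      finally show "lam n + \<epsilon> \<le> mnl d x (S' k) (\<theta> k) n" .
    qed simp
    finally show ?thesis .
  qed
  have mwS: "(\<Sum>n<N. real (q n) * (lam n + \<epsilon>)) \<le> ?mw" using mw' Sopt[OF S'A] by linarith
  have MK: "?M \<le> real K"
  proof -
    have "?M \<le> (\<Sum>k<K. 1)" by (intro sum_mono mnl_sum_le1 finS) auto
    then show ?thesis by simp
  qed
  have MN: "?M \<le> real N"
  proof -
    have "?M \<le> (\<Sum>k<K. \<Sum>n\<in>S k. 1)" by (intro sum_mono mnl_le1 finS) auto
    also have "\<dots> = (\<Sum>n\<in>?A. 1)" by (rule sum_part[OF SA active_fin, symmetric])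
    also have "\<dots> = real (card ?A)" by simp
    also have "\<dots> \<le> real N" using card_mono[OF _ active_sub, of N q] by simp
    finally show ?thesis .
  qed
  have LN: "(\<Sum>n<N. lam n) \<le> real N"
  proof -
    have "(\<Sum>n<N. lam n) \<le> (\<Sum>n<N. 1)" by (intro sum_mono) (use lam in auto)
    then show ?thesis by simp
  qed
  have LK: "(\<Sum>n<N. lam n) \<le> real K"
  proof -
    have "(\<Sum>n<N. lam n) = (\<Sum>k<K. \<Sum>n\<in>Ss k. lam n)" by (rule sum_part[OF Ss]) simp
    also have "\<dots> \<le> (\<Sum>k<K. \<Sum>n\<in>Ss k. mnl d x (Ss k) (\<theta> k) n)"
      by (intro sum_mono) (use slack eps in fastforce)
    also have "\<dots> \<le> (\<Sum>k<K. 1)" by (intro sum_mono mnl_sum_le1 finSs) auto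
    finally show ?thesis by simp
  qed
  have "(\<Sum>n<N. (2 * real (q n) + 1) * lam n) = 2 * (\<Sum>n<N. real (q n) * lam n) + (\<Sum>n<N. lam n)"
    by (simp add: algebra_simps sum.distrib sum_distrib_left)
  moreover have "(\<Sum>n<N. real (q n) * (lam n + \<epsilon>)) = (\<Sum>n<N. real (q n) * lam n) + \<epsilon> * (\<Sum>n<N. real (q n))"
    by (simp add: algebra_simps sum.distrib sum_distrib_left)
  moreover have "(\<Sum>n<N. lam n) + ?M \<le> 2 * real (min N K)"
    using MK MN LK LN by (cases "N \<le> K") (auto simp: min_def)
  ultimately show ?thesis using e1 mwS by linarith
qed


lemma nn_exp: "integrable (measure_pmf p) f \<Longrightarrow> (\<And>x. 0 \<le> f x) \<Longrightarrow>
   (\<integral>\<^sup>+x. ennreal (f x) \<partial>measure_pmf p) = ennreal (measure_pmf.expectation p f)"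
  by (rule nn_integral_eq_integral) auto

lemma step_nn:
  fixes N K :: nat and \<epsilon> :: real
  assumes pol: "\<forall>s. set_pmf (pol s) \<subseteq> maxweight_set d x \<theta> N K L (snd s)"
    and Ss: "Ss \<in> assortments K L {..<N}"
    and slack: "\<forall>k<K. \<forall>n\<in>Ss k. lam n + \<epsilon> \<le> mnl d x (Ss k) (\<theta> k) n"
    and lam: "\<And>n. n < N \<Longrightarrow> 0 \<le> lam n \<and> lam n \<le> 1"
    and eps: "0 < \<epsilon>"
  shows "(\<integral>\<^sup>+s'. ennreal (VV N (snd s')) \<partial>step d x \<theta> lam N K pol s)
     + ennreal (2 * \<epsilon> * (\<Sum>n<N. real (snd s n)))
     \<le> ennreal (VV N (snd s) + 2 * real (min N K))"
proof -
  let ?q = "snd s"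
  let ?B = "Pi_pmf {..<N} False (\<lambda>n. bernoulli_pmf (lam n))"
  let ?C = "\<lambda>S. Pi_pmf {..<K} None (\<lambda>k. mnl_choice d x (S k) (\<theta> k))"
  let ?R = "VV N ?q + 2 * real (min N K) - 2 * \<epsilon> * (\<Sum>n<N. real (?q n))"
  let ?Bq = "\<Sum>n<N. (real (?q n) + 1)^2"
  have eq: "(\<integral>\<^sup>+s'. ennreal (VV N (snd s')) \<partial>step d x \<theta> lam N K pol s)
     = (\<integral>\<^sup>+S. \<integral>\<^sup>+c. \<integral>\<^sup>+a. ennreal (VV N (qn K ?q c a)) \<partial>?B \<partial>?C S \<partial>pol s)"
    unfolding step_def by (simp add: Let_def qn_def)
  have inner: "(\<integral>\<^sup>+c. \<integral>\<^sup>+a. ennreal (VV N (qn K ?q c a)) \<partial>?B \<partial>?C S) \<le> ennreal ?R \<and> 0 \<le> ?R"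
    if S: "S \<in> set_pmf (pol s)" for S
  proof -
    have Sm: "S \<in> maxweight_set d x \<theta> N K L ?q" using spec[OF pol, of s] S by blast
    then have SA: "S \<in> assortments K L (active N ?q)" unfolding maxweight_set_def by auto
    have finS: "\<And>k. k<K \<Longrightarrow> finite (S k)"
      using assort_props(1)[OF SA] active_fin finite_subset by blast
    have iV: "integrable (measure_pmf P) (\<lambda>a. VV N (qn K ?q c a))" for P c
      by (rule bnd_int[where B="?Bq"]) (metis VV_nonneg VV_qn_bound abs_of_nonneg)
    have iE: "integrable (measure_pmf P) (\<lambda>c. measure_pmf.expectation ?B (\<lambda>a. VV N (qn K ?q c a)))" for P
      by (rule bnd_int[where B="?Bq"], rule int_le_const) (use VV_nonneg VV_qn_bound in auto)
    let ?E = "measure_pmf.expectation (?C S) (\<lambda>c. measure_pmf.expectation ?B (\<lambda>a. VV N (qn K ?q c a)))"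
    have E0: "0 \<le> ?E" by (simp add: Bochner_Integration.integral_nonneg VV_nonneg)
    have ER: "?E \<le> ?R"
    proof -
      have "?E \<le> VV N ?q + (\<Sum>n<N. (2 * real (?q n) + 1) * lam n)
      + (\<Sum>k<K. \<Sum>n\<in>S k \<inter> {..<N}. (1 - 2 * real (?q n)) * mnl d x (S k) (\<theta> k) n)"
        by (rule drift_S[OF finS assort_props(2)[OF SA] lam])
      also have "\<dots> \<le> ?R" by (rule drift_bound[OF Sm Ss slack lam eps])
      finally show ?thesis .
    qed
    have "(\<integral>\<^sup>+c. \<integral>\<^sup>+a. ennreal (VV N (qn K ?q c a)) \<partial>?B \<partial>?C S)
       = (\<integral>\<^sup>+c. ennreal (measure_pmf.expectation ?B (\<lambda>a. VV N (qn K ?q c a))) \<partial>?C S)"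
      by (rule nn_integral_cong) (rule nn_exp[OF iV VV_nonneg])
    also have "\<dots> = ennreal ?E"
      by (rule nn_exp[OF iE]) (simp add: Bochner_Integration.integral_nonneg VV_nonneg)
    also have "\<dots> \<le> ennreal ?R" using ER by (rule ennreal_leI)
    finally show ?thesis using E0 ER by simp
  qed
  obtain S0 where S0: "S0 \<in> set_pmf (pol s)" using set_pmf_not_empty by fast
  have Rnn: "0 \<le> ?R" using inner[OF S0] by simp
  have "(\<integral>\<^sup>+s'. ennreal (VV N (snd s')) \<partial>step d x \<theta> lam N K pol s) \<le> (\<integral>\<^sup>+S. ennreal ?R \<partial>pol s)"
    unfolding eq by (rule nn_integral_mono_AE) (use inner in \<open>auto intro!: AE_pmfI\<close>)
  also have "\<dots> = ennreal ?R" by simp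
  finally have "(\<integral>\<^sup>+s'. ennreal (VV N (snd s')) \<partial>step d x \<theta> lam N K pol s)
     + ennreal (2 * \<epsilon> * (\<Sum>n<N. real (snd s n))) \<le> ennreal ?R + ennreal (2 * \<epsilon> * (\<Sum>n<N. real (snd s n)))"
    by (rule add_right_mono)
  also have "\<dots> = ennreal (?R + 2 * \<epsilon> * (\<Sum>n<N. real (snd s n)))"
    using Rnn eps by (subst ennreal_plus) (auto intro!: sum_nonneg mult_nonneg_nonneg)
  also have "?R + 2 * \<epsilon> * (\<Sum>n<N. real (snd s n)) = VV N (snd s) + 2 * real (min N K)" by simp
  finally show ?thesis .
qed


lemma tele:
  fixes N K :: nat and \<epsilon> :: real
  assumes pol: "\<forall>s. set_pmf (pol s) \<subseteq> maxweight_set d x \<theta> N K L (snd s)"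
    and Ss: "Ss \<in> assortments K L {..<N}"
    and slack: "\<forall>k<K. \<forall>n\<in>Ss k. lam n + \<epsilon> \<le> mnl d x (Ss k) (\<theta> k) n"
    and lam: "\<And>n. n < N \<Longrightarrow> 0 \<le> lam n \<and> lam n \<le> 1"
    and eps: "0 < \<epsilon>"
  shows "(\<Sum>t<T. \<integral>\<^sup>+s. ennreal (2 * \<epsilon> * (\<Sum>n<N. real (snd s n))) \<partial>traj d x \<theta> lam N K pol t)
     + (\<integral>\<^sup>+s. ennreal (VV N (snd s)) \<partial>traj d x \<theta> lam N K pol T) \<le> of_nat T * ennreal (2 * real (min N K))"
proof (induction T)
  case 0
  then show ?case by (simp add: VV_def)
next
  case (Suc T)
  let ?p = "traj d x \<theta> lam N K pol T"
  let ?X = "\<lambda>t. \<integral>\<^sup>+s. ennreal (2 * \<epsilon> * (\<Sum>n<N. real (snd s n))) \<partial>traj d x \<theta> lam N K pol t"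
  let ?c = "ennreal (2 * real (min N K))"
  have "(\<integral>\<^sup>+s. ennreal (VV N (snd s)) \<partial>traj d x \<theta> lam N K pol (Suc T)) + ?X T
     = (\<integral>\<^sup>+s. (\<integral>\<^sup>+s'. ennreal (VV N (snd s')) \<partial>step d x \<theta> lam N K pol s) \<partial>?p) + ?X T"
    by simp
  also have "\<dots> = (\<integral>\<^sup>+s. (\<integral>\<^sup>+s'. ennreal (VV N (snd s')) \<partial>step d x \<theta> lam N K pol s)
        + ennreal (2 * \<epsilon> * (\<Sum>n<N. real (snd s n))) \<partial>?p)"
    by (rule nn_integral_add[symmetric]) auto
  also have "\<dots> \<le> (\<integral>\<^sup>+s. ennreal (VV N (snd s)) + ?c \<partial>?p)"
    by (rule nn_integral_mono) (subst ennreal_plus[symmetric], simp add: VV_nonneg, simp, rule step_nn[OF pol Ss slack lam eps])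
  also have "\<dots> = (\<integral>\<^sup>+s. ennreal (VV N (snd s)) \<partial>?p) + ?c"
    by (subst nn_integral_add) auto
  finally have st: "(\<integral>\<^sup>+s. ennreal (VV N (snd s)) \<partial>traj d x \<theta> lam N K pol (Suc T)) + ?X T
      \<le> (\<integral>\<^sup>+s. ennreal (VV N (snd s)) \<partial>?p) + ?c" .
  have "(\<Sum>t<Suc T. ?X t) + (\<integral>\<^sup>+s. ennreal (VV N (snd s)) \<partial>traj d x \<theta> lam N K pol (Suc T))
      = (\<Sum>t<T. ?X t) + ((\<integral>\<^sup>+s. ennreal (VV N (snd s)) \<partial>traj d x \<theta> lam N K pol (Suc T)) + ?X T)"
    by (simp add: ac_simps)
  also have "\<dots> \<le> (\<Sum>t<T. ?X t) + ((\<integral>\<^sup>+s. ennreal (VV N (snd s)) \<partial>?p) + ?c)"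
    by (rule add_left_mono[OF st])
  also have "\<dots> = ((\<Sum>t<T. ?X t) + (\<integral>\<^sup>+s. ennreal (VV N (snd s)) \<partial>?p)) + ?c"
    by (simp add: ac_simps)
  also have "\<dots> \<le> of_nat T * ?c + ?c"
    by (rule add_right_mono[OF Suc.IH])
  also have "\<dots> = of_nat (Suc T) * ?c" by (simp add: distrib_right)
  finally show ?case .
qed


lemma exp_nn_le:
  fixes f :: "_ \<Rightarrow> real"
  assumes "\<And>x. 0 \<le> f x" "0 \<le> c"
  shows "ennreal (c * measure_pmf.expectation p f) \<le> (\<integral>\<^sup>+x. ennreal (c * f x) \<partial>measure_pmf p)"
proof -
  let ?I = "\<integral>\<^sup>+x. ennreal (f x) \<partial>measure_pmf p"
  have "measure_pmf.expectation p f = enn2real ?I"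
    by (rule integral_eq_nn_integral) (use assms in auto)
  then have "ennreal (c * measure_pmf.expectation p f) = ennreal c * ennreal (enn2real ?I)"
    using assms by (simp add: ennreal_mult)
  also have "\<dots> \<le> ennreal c * ?I"
    by (rule mult_left_mono) (auto simp: ennreal_enn2real_if)
  also have "\<dots> = (\<integral>\<^sup>+x. ennreal c * ennreal (f x) \<partial>measure_pmf p)"
    by (rule nn_integral_cmult[symmetric]) auto
  also have "\<dots> = (\<integral>\<^sup>+x. ennreal (c * f x) \<partial>measure_pmf p)"
    using assms by (simp add: ennreal_mult)
  finally show ?thesis .
qed

theorem proposition1:
  shows "\<exists>C>0. \<forall>(N::nat) (K::nat) (L::nat) (d::nat) (x::nat \<Rightarrow> nat \<Rightarrow> real) (\<theta>::nat \<Rightarrow> nat \<Rightarrow> real)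
            (lam::nat \<Rightarrow> real) (\<epsilon>::real) (pol::hist \<Rightarrow> (nat \<Rightarrow> nat set) pmf) (T::nat).
    1 \<le> N \<and> 1 \<le> K \<and> 1 \<le> L \<and> 1 \<le> d \<and> N \<le> K * L
    \<and> (\<forall>n<N. sqnorm d (x n) \<le> 1) \<and> (\<forall>k<K. sqnorm d (\<theta> k) \<le> 1)
    \<and> (\<exists>\<kappa>>0. \<forall>S. S \<subseteq> {..<N} \<and> card S \<le> L \<longrightarrow>
          (\<forall>n\<in>S. \<forall>th. sqnorm d th \<le> 1 \<longrightarrow> mnl d x S th n * mnl0 d x S th \<ge> \<kappa>))
    \<and> (\<forall>n<N. 0 \<le> lam n \<and> lam n \<le> 1)
    \<and> 0 < \<epsilon> \<and> \<epsilon> < 1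
    \<and> (\<exists>S\<in>assortments K L {..<N}. \<forall>k<K. \<forall>n\<in>S k. lam n + \<epsilon> \<le> mnl d x (S k) (\<theta> k) n)
    \<and> (\<forall>s. set_pmf (pol s) \<subseteq> maxweight_set d x \<theta> N K L (snd s))
    \<and> 1 \<le> T
    \<longrightarrow> avg_queue d x \<theta> lam N K pol T \<le> C * real (min N K) / \<epsilon>"
proof (rule exI[of _ 1], intro conjI allI impI)
  fix N K L d :: nat and x \<theta> :: "nat \<Rightarrow> nat \<Rightarrow> real" and lam :: "nat \<Rightarrow> real" and \<epsilon> :: real
    and pol :: "hist \<Rightarrow> (nat \<Rightarrow> nat set) pmf" and T :: nat
  assume H: "1 \<le> N \<and> 1 \<le> K \<and> 1 \<le> L \<and> 1 \<le> d \<and> N \<le> K * L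
    \<and> (\<forall>n<N. sqnorm d (x n) \<le> 1) \<and> (\<forall>k<K. sqnorm d (\<theta> k) \<le> 1)
    \<and> (\<exists>\<kappa>>0. \<forall>S. S \<subseteq> {..<N} \<and> card S \<le> L \<longrightarrow>
          (\<forall>n\<in>S. \<forall>th. sqnorm d th \<le> 1 \<longrightarrow> mnl d x S th n * mnl0 d x S th \<ge> \<kappa>))
    \<and> (\<forall>n<N. 0 \<le> lam n \<and> lam n \<le> 1)
    \<and> 0 < \<epsilon> \<and> \<epsilon> < 1
    \<and> (\<exists>S\<in>assortments K L {..<N}. \<forall>k<K. \<forall>n\<in>S k. lam n + \<epsilon> \<le> mnl d x (S k) (\<theta> k) n)
    \<and> (\<forall>s. set_pmf (pol s) \<subseteq> maxweight_set d x \<theta> N K L (snd s))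
    \<and> 1 \<le> T"
  then have lam: "\<And>n. n < N \<Longrightarrow> 0 \<le> lam n \<and> lam n \<le> 1" and eps: "0 < \<epsilon>"
    and pol: "\<forall>s. set_pmf (pol s) \<subseteq> maxweight_set d x \<theta> N K L (snd s)" and T: "1 \<le> T"
    by auto
  from H obtain Ss where Ss: "Ss \<in> assortments K L {..<N}"
    and slack: "\<forall>k<K. \<forall>n\<in>Ss k. lam n + \<epsilon> \<le> mnl d x (Ss k) (\<theta> k) n" by blast
  let ?E = "\<lambda>t n. measure_pmf.expectation (traj d x \<theta> lam N K pol t) (\<lambda>s. real (snd s n))"
  let ?X = "\<Sum>t<T. \<Sum>n<N. ?E t n"
  let ?m = "real (min N K)"
  have E0: "0 \<le> ?E t n" for t n by (simp add: Bochner_Integration.integral_nonneg)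
  have "ennreal (2 * \<epsilon> * ?X) = (\<Sum>t<T. \<Sum>n<N. ennreal (2 * \<epsilon> * ?E t n))"
    using eps E0 by (simp add: sum_distrib_left sum_nonneg)
  also have "\<dots> \<le> (\<Sum>t<T. \<Sum>n<N. \<integral>\<^sup>+s. ennreal (2 * \<epsilon> * real (snd s n)) \<partial>traj d x \<theta> lam N K pol t)"
    by (intro sum_mono exp_nn_le) (use eps in auto)
  also have "\<dots> = (\<Sum>t<T. \<integral>\<^sup>+s. ennreal (2 * \<epsilon> * (\<Sum>n<N. real (snd s n))) \<partial>traj d x \<theta> lam N K pol t)"
  proof (rule sum.cong[OF refl])
    fix t
    show "(\<Sum>n<N. \<integral>\<^sup>+s. ennreal (2 * \<epsilon> * real (snd s n)) \<partial>traj d x \<theta> lam N K pol t)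
       = (\<integral>\<^sup>+s. ennreal (2 * \<epsilon> * (\<Sum>n<N. real (snd s n))) \<partial>traj d x \<theta> lam N K pol t)"
      using eps by (subst nn_integral_sum[symmetric]) (auto simp: sum_distrib_left intro!: nn_integral_cong)
  qed
  also have "\<dots> \<le> (\<Sum>t<T. \<integral>\<^sup>+s. ennreal (2 * \<epsilon> * (\<Sum>n<N. real (snd s n))) \<partial>traj d x \<theta> lam N K pol t)
     + (\<integral>\<^sup>+s. ennreal (VV N (snd s)) \<partial>traj d x \<theta> lam N K pol T)"
    by (rule add_increasing2) auto
  also have "\<dots> \<le> of_nat T * ennreal (2 * ?m)"
    by (rule tele[OF pol Ss slack lam eps])
  also have "\<dots> = ennreal (real T * (2 * ?m))"
    by (simp add: ennreal_mult ennreal_of_nat_eq_real_of_nat)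
  finally have "2 * \<epsilon> * ?X \<le> real T * (2 * ?m)"
    by (subst (asm) ennreal_le_iff) auto
  then have X: "?X \<le> real T * ?m / \<epsilon>" using eps by (simp add: field_simps)
  have "avg_queue d x \<theta> lam N K pol T = ?X / real T" unfolding avg_queue_def by simp
  also have "\<dots> \<le> (real T * ?m / \<epsilon>) / real T" using X T by (intro divide_right_mono) auto
  also have "\<dots> = 1 * ?m / \<epsilon>" using T by simp
  finally show "avg_queue d x \<theta> lam N K pol T \<le> 1 * ?m / \<epsilon>" .
qed simp


end
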